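(* Let $g\ge2$ and let $q_i(x,y)=a_ix^2+2b_ixy+c_iy^2$ ($i=1,\ldots,g$) be integer binary quadratic forms, irreducible over the integers, with $a_i\equiv1\pmod4$ and $D:=\prod_{p\le2g}p\prod_ka_kc_k\delta_k\prod_{i<j}\operatorname{Res}(q_i,q_j)\neq0$. For a prime $p\nmid D$ define $$\omega(p):=p\sum_{\substack{c_1\mid p,\ldots,c_g\mid p\\ p\mid c_1\cdots c_g}}\mu(p)\mu(c_1)\cdots\mu(c_g)\frac{\rho(c_1,\ldots,c_g)}{(c_1\cdots c_g)^2}.$$ Then for every prime $p\nmid D$, $$\omega(p)=p^{-1}\bigl(\rho(p,1,\ldots,1)+\rho(1,p,1,\ldots,1)+\cdots+\rho(1,\ldots,1,p)+1-g\bigr).$$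
   Context: $\delta_k$ is the discriminant of $q_k$, $\operatorname{Res}$ the resultant, $\mu$ the Möbius function. For positive integers $c_1,\ldots,c_g$: $\Lambda_{\mathbf c}:=\{\mathbf x\in\mathbb Z^2:c_i\mid q_i(\mathbf x)\ \forall i\}$ and $\rho(\mathbf c):=\#(\Lambda_{\mathbf c}\cap[0,c_1\cdots c_g)^2)$. *)

theory Defs
  imports "HOL-Computational_Algebra.Computational_Algebra"
begin

definition qform :: "int \<Rightarrow> int \<Rightarrow> int \<Rightarrow> int \<Rightarrow> int \<Rightarrow> int" where
  "qform a b c x y = a * x^2 + 2 * b * x * y + c * y^2"

definition qdisc :: "int \<Rightarrow> int \<Rightarrow> int \<Rightarrow> int" where
  "qdisc a b c = (2*b)^2 - 4*a*c"

text \<open>Resultant of the binary forms a x^2 + B x y + c y^2 and a' x^2 + B' x y + c' y^2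
  (B = 2b, B' = 2b'): the Sylvester determinant (ac'-a'c)^2 - (aB'-a'B)(Bc'-B'c).\<close>
definition qres :: "int \<Rightarrow> int \<Rightarrow> int \<Rightarrow> int \<Rightarrow> int \<Rightarrow> int \<Rightarrow> int" where
  "qres a b c a' b' c' =
     (a*c' - a'*c)^2 - (a*(2*b') - a'*(2*b)) * ((2*b)*c' - (2*b')*c)"

definition moebius :: "nat \<Rightarrow> int" where
  "moebius n = (if squarefree n then (-1) ^ card (prime_factors n) else 0)"

definition rho :: "nat \<Rightarrow> (nat \<Rightarrow> int) \<Rightarrow> (nat \<Rightarrow> int) \<Rightarrow> (nat \<Rightarrow> int) \<Rightarrow> (nat \<Rightarrow> nat) \<Rightarrow> nat" where
  "rho g a b c d = card {(x::int, y::int).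
      0 \<le> x \<and> x < int (\<Prod>i<g. d i) \<and> 0 \<le> y \<and> y < int (\<Prod>i<g. d i) \<and>
      (\<forall>i<g. int (d i) dvd qform (a i) (b i) (c i) x y)}"

definition bigD :: "nat \<Rightarrow> (nat \<Rightarrow> int) \<Rightarrow> (nat \<Rightarrow> int) \<Rightarrow> (nat \<Rightarrow> int) \<Rightarrow> int" where
  "bigD g a b c =
     (\<Prod>p\<in>{p. prime p \<and> p \<le> 2*g}. int p) *
     (\<Prod>k<g. a k * c k * qdisc (a k) (b k) (c k)) *
     (\<Prod>(i, j)\<in>{(i, j). i < j \<and> j < g}. qres (a i) (b i) (c i) (a j) (b j) (c j))"

definition omega :: "nat \<Rightarrow> (nat \<Rightarrow> int) \<Rightarrow> (nat \<Rightarrow> int) \<Rightarrow> (nat \<Rightarrow> int) \<Rightarrow> nat \<Rightarrow> real" where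
  "omega g a b c p = real p *
     (\<Sum>d\<in>{d \<in> {..<g} \<rightarrow>\<^sub>E {k. k dvd p}. p dvd (\<Prod>i<g. d i)}.
        of_int (moebius p * (\<Prod>i<g. moebius (d i))) * real (rho g a b c d)
        / (real (\<Prod>i<g. d i))^2)"

end

theory Submission imports Defs begin

lemma res_ident_x:
  fixes a B c a1 B1 c1 x y :: int
  shows "((a*c1 - a1*c)^2 - (a*B1 - a1*B)*(B*c1 - B1*c)) * x^3 =
    ((a*c1^2 - B*B1*c1 + c*B1^2 - c*a1*c1) * x + (- B*c1^2 + c*B1*c1) * y) * (a*x^2 + B*x*y + c*y^2)
  + ((B^2*c1 - B*c*B1 - a*c*c1 + c^2*a1) * x + (B*c*c1 - c^2*B1) * y) * (a1*x^2 + B1*x*y + c1*y^2)"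
  by (simp add: power2_eq_square power3_eq_cube algebra_simps)

lemma res_ident_y:
  fixes a B c a1 B1 c1 x y :: int
  shows "((a*c1 - a1*c)^2 - (a*B1 - a1*B)*(B*c1 - B1*c)) * y^3 =
    ((a*a1*B1 - B*a1^2) * x + (a*B1^2 - a*a1*c1 - B*a1*B1 + c*a1^2) * y) * (a*x^2 + B*x*y + c*y^2)
  + ((a*B*a1 - a^2*B1) * x + (a^2*c1 - a*B*B1 + B^2*a1 - a*c*a1) * y) * (a1*x^2 + B1*x*y + c1*y^2)"
  by (simp add: power2_eq_square power3_eq_cube algebra_simps)

lemma res_zero:
  fixes p :: nat
  assumes "prime p" "\<not> int p dvd qres a b c a1 b1 c1"
    "int p dvd qform a b c x y" "int p dvd qform a1 b1 c1 x y"
  shows "int p dvd x \<and> int p dvd y"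
proof -
  have pr: "prime (int p)" using assms(1) by simp
  have q1: "qform a b c x y = a*x^2 + (2*b)*x*y + c*y^2" by (simp add: qform_def)
  have q2: "qform a1 b1 c1 x y = a1*x^2 + (2*b1)*x*y + c1*y^2" by (simp add: qform_def)
  have r: "qres a b c a1 b1 c1 = (a*c1 - a1*c)^2 - (a*(2*b1) - a1*(2*b))*((2*b)*c1 - (2*b1)*c)"
    by (simp add: qres_def)
  have "qres a b c a1 b1 c1 * x^3 =
    ((a*c1^2 - (2*b)*(2*b1)*c1 + c*(2*b1)^2 - c*a1*c1) * x + (- (2*b)*c1^2 + c*(2*b1)*c1) * y) * qform a b c x y
  + (((2*b)^2*c1 - (2*b)*c*(2*b1) - a*c*c1 + c^2*a1) * x + ((2*b)*c*c1 - c^2*(2*b1)) * y) * qform a1 b1 c1 x y"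
    unfolding r q1 q2 by (rule res_ident_x)
  hence "int p dvd qres a b c a1 b1 c1 * x^3" using assms(3,4) by simp
  hence "int p dvd x^3" using pr assms(2) prime_dvd_mult_iff by blast
  hence X: "int p dvd x" using pr prime_dvd_power by blast
  have "qres a b c a1 b1 c1 * y^3 =
    ((a*a1*(2*b1) - (2*b)*a1^2) * x + (a*(2*b1)^2 - a*a1*c1 - (2*b)*a1*(2*b1) + c*a1^2) * y) * qform a b c x y
  + ((a*(2*b)*a1 - a^2*(2*b1)) * x + (a^2*c1 - a*(2*b)*(2*b1) + (2*b)^2*a1 - a*c*a1) * y) * qform a1 b1 c1 x y"
    unfolding r q1 q2 by (rule res_ident_y)
  hence "int p dvd qres a b c a1 b1 c1 * y^3" using assms(3,4) by simp
  hence "int p dvd y^3" using pr assms(2) prime_dvd_mult_iff by blast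
  hence "int p dvd y" using pr prime_dvd_power by blast
  with X show ?thesis by simp
qed

lemma rho_cong:
  assumes "\<And>i. i < g \<Longrightarrow> d i = d' i"
  shows "rho g a b c d = rho g a b c d'"
proof -
  have "(\<Prod>i<g. d i) = (\<Prod>i<g. d' i)" by (rule prod.cong) (auto simp: assms)
  thus ?thesis unfolding rho_def using assms by metis
qed

lemma prod_if_set:
  fixes g :: nat
  assumes "S \<subseteq> {..<g}"
  shows "(\<Prod>i<g. (if i \<in> S then u else 1)) = (u::'a::comm_monoid_mult) ^ card S"
proof -
  have "(\<Prod>i<g. (if i \<in> S then u else 1)) = prod (\<lambda>_. u) ({..<g} \<inter> {i. i \<in> S}) * prod (\<lambda>_. 1) ({..<g} \<inter> - {i. i \<in> S})"
    by (rule prod.If_cases) simp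
  moreover have "{..<g} \<inter> {i. i \<in> S} = S" using assms by auto
  ultimately show ?thesis by simp
qed

lemma card_mult_p:
  fixes p k :: nat
  assumes "p > 0" "k \<ge> 1"
  shows "card {x::int. 0 \<le> x \<and> x < int (p^k) \<and> int p dvd x} = p^(k-1)"
proof -
  have e: "{x::int. 0 \<le> x \<and> x < int (p^k) \<and> int p dvd x} = (\<lambda>t. int p * t) ` {0..<int (p^(k-1))}"
  proof (intro set_eqI iffI)
    fix x assume "x \<in> {x::int. 0 \<le> x \<and> x < int (p^k) \<and> int p dvd x}"
    then obtain t where t: "x = int p * t" "0 \<le> int p * t" "int p * t < int (p^k)" by auto
    have pk: "int (p^k) = int p * int (p^(k-1))" using assms
      by (metis Suc_diff_le diff_Suc_1 of_nat_mult power_Suc)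
    have "0 \<le> t" using t(2) assms by (simp add: zero_le_mult_iff)
    moreover have "t < int (p^(k-1))" using t(3) unfolding pk using assms by simp
    ultimately show "x \<in> (\<lambda>t. int p * t) ` {0..<int (p^(k-1))}" using t(1) by auto
  next
    fix x assume "x \<in> (\<lambda>t. int p * t) ` {0..<int (p^(k-1))}"
    then obtain t where t: "x = int p * t" "0 \<le> t" "t < int (p^(k-1))"
      by (metis (no_types) atLeastLessThan_iff imageE)
    have pk: "int (p^k) = int p * int (p^(k-1))" using assms
      by (metis Suc_diff_le diff_Suc_1 of_nat_mult power_Suc)
    show "x \<in> {x::int. 0 \<le> x \<and> x < int (p^k) \<and> int p dvd x}"
      using t assms unfolding pk by auto
  qed
  have "inj_on (\<lambda>t. int p * t) {0..<int (p^(k-1))}" using assms by (auto simp: inj_on_def)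
  hence "card ((\<lambda>t. int p * t) ` {0..<int (p^(k-1))}) = card {0..<int (p^(k-1))}"
    by (rule card_image)
  also have "\<dots> = p^(k-1)" by (simp only: card_atLeastLessThan_int)
  finally show ?thesis unfolding e .
qed

lemma rho_multi:
  fixes p :: nat
  assumes "prime p" "S \<subseteq> {..<g}" "card S \<ge> 2"
    and nres: "\<And>i j. i \<in> S \<Longrightarrow> j \<in> S \<Longrightarrow> i < j \<Longrightarrow>
        \<not> int p dvd qres (a i) (b i) (c i) (a j) (b j) (c j)"
  shows "rho g a b c (\<lambda>i. if i \<in> S then p else 1) = p^(2*(card S - 1))"
proof -
  let ?k = "card S"
  let ?A = "{x::int. 0 \<le> x \<and> x < int (p^?k) \<and> int p dvd x}"
  have p0: "p > 0" using assms(1) prime_gt_0_nat by blast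
  have pr: "(\<Prod>i<g. (if i \<in> S then p else 1)) = p^?k" by (rule prod_if_set[OF assms(2)])
  have fin: "finite S" using assms(2) finite_subset by blast
  obtain i j where ij: "i \<in> S" "j \<in> S" "i < j"
  proof -
    obtain i j where "i \<in> S" "j \<in> S" "i \<noteq> j" using assms(3) fin
      by (metis One_nat_def card_le_Suc0_iff_eq not_less_eq_eq numeral_2_eq_2)
    thus ?thesis using that by (metis linorder_neqE_nat)
  qed
  have ig: "i < g" "j < g" using ij assms(2) by auto
  have qdvd: "int p dvd qform a' b' c' x y" if "int p dvd x" "int p dvd y" for a' b' c' x y
    using that unfolding qform_def by (simp add: power2_eq_square)
  have "{(x::int, y::int). 0 \<le> x \<and> x < int (\<Prod>i<g. (if i \<in> S then p else 1)) \<and>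
         0 \<le> y \<and> y < int (\<Prod>i<g. (if i \<in> S then p else 1)) \<and>
         (\<forall>i<g. int (if i \<in> S then p else 1) dvd qform (a i) (b i) (c i) x y)} = ?A \<times> ?A"
    unfolding pr
  proof (intro set_eqI iffI)
    fix z assume z: "z \<in> {(x::int, y::int). 0 \<le> x \<and> x < int (p^?k) \<and>
         0 \<le> y \<and> y < int (p^?k) \<and>
         (\<forall>i<g. int (if i \<in> S then p else 1) dvd qform (a i) (b i) (c i) x y)}"
    obtain x y where xy: "z = (x, y)" by fastforce
    have h1: "int p dvd qform (a i) (b i) (c i) x y" using z xy ig(1) ij(1) by auto
    have h2: "int p dvd qform (a j) (b j) (c j) x y" using z xy ig(2) ij(2) by auto
    have "int p dvd x \<and> int p dvd y"
      by (rule res_zero[OF assms(1) nres[OF ij] h1 h2])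
    thus "z \<in> ?A \<times> ?A" using z xy by auto
  next
    fix z assume z: "z \<in> ?A \<times> ?A"
    obtain x y where xy: "z = (x, y)" by fastforce
    show "z \<in> {(x::int, y::int). 0 \<le> x \<and> x < int (p^?k) \<and>
         0 \<le> y \<and> y < int (p^?k) \<and>
         (\<forall>i<g. int (if i \<in> S then p else 1) dvd qform (a i) (b i) (c i) x y)}"
      using z xy qdvd by auto
  qed
  hence "rho g a b c (\<lambda>i. if i \<in> S then p else 1) = card (?A \<times> ?A)"
    unfolding rho_def by simp
  also have "\<dots> = p^(?k - 1) * p^(?k-1)"
    using card_mult_p[OF p0, of ?k] assms(3) by (simp add: card_cartesian_product)
  also have "\<dots> = p^(2*(?k - 1))" by (simp add: power_add[symmetric] mult_2)
  finally show ?thesis .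
qed


lemma aux_cancel: "(x::real) \<noteq> 0 \<Longrightarrow> z * x / (x * y) = z / y"
  by simp

lemma aux_final: "(x::real) \<noteq> 0 \<Longrightarrow> x * (y / x^2) = 1/x * y"
  by (simp add: power2_eq_square)

theorem lemma3p3:
  fixes g :: nat and a b c :: "nat \<Rightarrow> int" and p :: nat
  assumes "g \<ge> 2"
    and "\<forall>i<g. irreducible [:c i, 2 * b i, a i:]"
    and "\<forall>i<g. a i mod 4 = 1"
    and "bigD g a b c \<noteq> 0"
    and "prime p"
    and "\<not> int p dvd bigD g a b c"
  shows "omega g a b c p =
           (1 / real p) * ((\<Sum>j<g. real (rho g a b c (\<lambda>i. if i = j then p else 1)))
                           + 1 - real g)"
proof -
  have pr: "prime p" by fact
  have p1: "p \<noteq> 1" "p > 0" using pr prime_gt_1_nat prime_gt_0_nat by auto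
  have divp: "k dvd p \<longleftrightarrow> k = 1 \<or> k = p" for k using pr prime_nat_iff by auto
  have nres: "\<not> int p dvd qres (a i) (b i) (c i) (a j) (b j) (c j)" if "i < j" "j < g" for i j
  proof
    assume h: "int p dvd qres (a i) (b i) (c i) (a j) (b j) (c j)"
    have fin: "finite {(i, j). i < j \<and> j < (g::nat)}"
      by (rule finite_subset[of _ "{..<g} \<times> {..<g}"]) auto
    have "qres (a i) (b i) (c i) (a j) (b j) (c j) dvd
      (\<Prod>(i, j)\<in>{(i, j). i < j \<and> j < g}. qres (a i) (b i) (c i) (a j) (b j) (c j))"
      using dvd_prodI[OF fin, of "(i,j)" "\<lambda>(i, j). qres (a i) (b i) (c i) (a j) (b j) (c j)"] that
      by simp
    hence "int p dvd bigD g a b c" unfolding bigD_def using h dvd_trans dvd_mult by blast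
    thus False using assms(6) by simp
  qed
  have mu_p: "moebius p = -1"
    using pr by (simp add: moebius_def squarefree_prime prime_prime_factors)
  have mu_1: "moebius 1 = 1" by (simp add: moebius_def)
  define A where "A = {..<g}"
  define Dom where "Dom = {d \<in> {..<g} \<rightarrow>\<^sub>E {k. k dvd p}. p dvd (\<Prod>i<g. d i)}"
  define T where "T = Pow A - {{}}"
  define hS where "hS S = restrict (\<lambda>i. if i \<in> S then p else 1) {..<g}" for S
  define jD where "jD d = {i \<in> {..<g}. d i = p}" for d :: "nat \<Rightarrow> nat"
  define rS where "rS S = real (rho g a b c (\<lambda>i. if i \<in> S then p else 1))" for S
  define F where "F d = of_int (moebius p * (\<Prod>i<g. moebius (d i))) * real (rho g a b c d)
        / (real (\<Prod>i<g. d i))^2" for d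
  define G where "G S = (-1)^(card S + 1) / (real p)^2 + (if card S = 1 then (rS S - 1) / (real p)^2 else 0)" for S
  have omega_eq: "omega g a b c p = real p * (\<Sum>d\<in>Dom. F d)"
    unfolding omega_def Dom_def F_def by simp
  have TA: "S \<subseteq> {..<g}" "S \<noteq> {}" if "S \<in> T" for S using that unfolding T_def A_def by auto
  have prodh: "(\<Prod>i<g. hS S i) = p ^ card S" if "S \<in> T" for S
  proof -
    have "(\<Prod>i<g. hS S i) = (\<Prod>i<g. (if i \<in> S then p else 1))"
      by (rule prod.cong) (auto simp: hS_def)
    thus ?thesis using prod_if_set[OF TA(1)[OF that]] by simp
  qed
  have FG: "F (hS S) = G S" if "S \<in> T" for S
  proof -
    have fin: "finite S" using TA(1)[OF that] finite_subset by blast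
    have k1: "card S \<ge> 1" using TA(2)[OF that] fin by (simp add: Suc_le_eq card_gt_0_iff)
    have m: "(\<Prod>i<g. moebius (hS S i)) = (-1) ^ card S"
    proof -
      have "(\<Prod>i<g. moebius (hS S i)) = (\<Prod>i<g. (if i \<in> S then -1 else 1))"
        by (rule prod.cong) (auto simp: hS_def mu_p mu_1[simplified])
      thus ?thesis using prod_if_set[OF TA(1)[OF that]] by simp
    qed
    have r: "rho g a b c (hS S) = rho g a b c (\<lambda>i. if i \<in> S then p else 1)"
      by (rule rho_cong) (simp add: hS_def)
    have F1: "F (hS S) = (-1)^(card S + 1) * rS S / (real p ^ card S)^2"
      unfolding F_def m r prodh[OF that] rS_def by (simp add: mu_p)
    show ?thesis
    proof (cases "card S = 1")
      case True
      thus ?thesis unfolding F1 G_def by (simp add: diff_divide_distrib)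
    next
      case False
      hence k2: "card S \<ge> 2" using k1 by simp
      have "rS S = real p ^ (2 * (card S - 1))"
        unfolding rS_def
        using rho_multi[OF pr TA(1)[OF that] k2, of a b c] nres TA(1)[OF that]
        by (simp add: subset_iff)
      moreover have "(real p ^ card S)^2 = real p ^ (2 * (card S - 1)) * (real p)^2"
      proof -
        obtain m where m: "card S = Suc m" using k1 by (cases "card S") auto
        have e1: "(real p ^ Suc m)^2 = (real p)^2 * (real p ^ m)^2"
          by (simp only: power_Suc power_mult_distrib)
        have e2: "real p ^ (2*m) = (real p ^ m)^2"
          by (metis power_mult mult.commute)
        show ?thesis unfolding m e1 using e2 by simp
      qed
      ultimately show ?thesis unfolding F1 G_def using False p1 aux_cancel by simp
    qed
  qed
  have dPi: "d \<in> {..<g} \<rightarrow>\<^sub>E {k. k dvd p}" and dP: "p dvd (\<Prod>i<g. d i)"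
    if "d \<in> Dom" for d using that unfolding Dom_def by blast+
  have dvals: "d i = 1 \<or> d i = p" if "d \<in> Dom" "i < g" for d i
  proof -
    have "d i \<in> {k. k dvd p}" using PiE_mem[OF dPi[OF that(1)]] that(2) by blast
    thus ?thesis using divp by blast
  qed
  have w1: "hS (jD d) = d" if "d \<in> Dom" for d
  proof
    fix i
    show "hS (jD d) i = d i"
    proof (cases "i < g")
      case True
      have "d i = 1 \<or> d i = p" by (rule dvals[OF that True])
      moreover have "hS (jD d) i = (if d i = p then p else 1)"
        using True unfolding hS_def jD_def by simp
      ultimately show ?thesis by metis
    next
      case False
      have "d i = undefined" using PiE_arb[OF dPi[OF that]] False by simp
      moreover have "hS (jD d) i = undefined" using False unfolding hS_def by simp
      ultimately show ?thesis by simp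
    qed
  qed
  have w2: "jD d \<in> T" if "d \<in> Dom" for d
  proof -
    have "jD d \<noteq> {}"
    proof
      assume e: "jD d = {}"
      have "(\<Prod>i<g. d i) = (\<Prod>i<g. 1)"
      proof (rule prod.cong)
        fix i assume "i \<in> {..<g}"
        hence "i < g" "d i \<noteq> p" using e unfolding jD_def by auto
        thus "d i = 1" using dvals[OF that] by blast
      qed simp
      hence "p dvd 1" using dP[OF that] by simp
      thus False using p1 by simp
    qed
    moreover have "jD d \<subseteq> A" unfolding jD_def A_def by auto
    ultimately show ?thesis unfolding T_def by auto
  qed
  have w3: "jD (hS S) = S" if "S \<in> T" for S
    using TA(1)[OF that] p1 unfolding jD_def hS_def by auto
  have w4: "hS S \<in> Dom" if "S \<in> T" for S
  proof -
    have fin: "finite S" using TA(1)[OF that] finite_subset by blast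
    have k1: "card S \<ge> 1" using TA(2)[OF that] fin by (simp add: Suc_le_eq card_gt_0_iff)
    have "hS S \<in> {..<g} \<rightarrow>\<^sub>E {k. k dvd p}" unfolding hS_def by (simp add: restrict_PiE_iff)
    moreover have "p dvd (\<Prod>i<g. hS S i)" unfolding prodh[OF that] using k1
      by (simp add: dvd_power)
    ultimately show ?thesis unfolding Dom_def by simp
  qed
  have reidx: "(\<Sum>d\<in>Dom. F d) = (\<Sum>S\<in>T. G S)"
  proof (rule sum.reindex_bij_witness[of Dom hS jD])
    fix d assume "d \<in> Dom"
    thus "G (jD d) = F d" using FG[OF w2] w1 by metis
  qed (auto simp: w1 w2 w3 w4)
  have finA: "finite A" unfolding A_def by simp
  have alt0: "(\<Sum>S\<in>Pow A. (-1::real)^card S) = 0"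
  proof -
    have "(\<Prod>x\<in>A. (1::real) - 1) = (\<Sum>X\<in>Pow A. (-1) ^ card X * (\<Prod>x\<in>X. 1) * (\<Prod>x\<in>A-X. 1))"
      by (rule prod_diff_conv_sum[OF finA])
    moreover have "A \<noteq> {}" unfolding A_def using assms(1) lessThan_empty_iff by simp
    moreover have "card A > 0" using \<open>A \<noteq> {}\<close> finA by (simp add: card_gt_0_iff)
    hence "(0::real) ^ card A = 0" by simp
    ultimately show ?thesis by simp
  qed
  have s1: "(\<Sum>S\<in>T. (-1::real)^(card S + 1)) = 1"
  proof -
    have "(\<Sum>S\<in>Pow A. (-1::real)^(card S + 1)) = - (\<Sum>S\<in>Pow A. (-1::real)^card S)"
      by (simp add: sum_negf[symmetric])
    also have "\<dots> = 0" using alt0 by simp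
    finally have z: "(\<Sum>S\<in>Pow A. (-1::real)^(card S + 1)) = 0" .
    have "(\<Sum>S\<in>Pow A. (-1::real)^(card S + 1)) = (-1)^(card {} + 1) + (\<Sum>S\<in>T. (-1::real)^(card S + 1))"
      unfolding T_def using finA sum.remove[of "Pow A" "{}" "\<lambda>S. (-1::real)^(card S + 1)"] by simp
    with z show ?thesis by simp
  qed
  have s2: "(\<Sum>S\<in>T. (if card S = 1 then (rS S - 1) / (real p)^2 else 0)) =
      (\<Sum>j<g. (real (rho g a b c (\<lambda>i. if i = j then p else 1)) - 1) / (real p)^2)"
  proof -
    have finT: "finite T" unfolding T_def using finA by simp
    have "(\<Sum>S\<in>T. (if card S = 1 then (rS S - 1) / (real p)^2 else 0)) =
        (\<Sum>S\<in>{S\<in>T. card S = 1}. (rS S - 1) / (real p)^2)"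
      using finT by (simp add: sum.inter_filter)
    also have "{S\<in>T. card S = 1} = (\<lambda>j. {j}) ` {..<g}"
      unfolding T_def A_def by (auto simp: card_1_singleton_iff)
    also have "(\<Sum>S\<in>(\<lambda>j. {j}) ` {..<g}. (rS S - 1) / (real p)^2) =
        (\<Sum>j<g. (rS {j} - 1) / (real p)^2)"
      by (subst sum.reindex) (auto simp: inj_on_def)
    also have "\<dots> = (\<Sum>j<g. (real (rho g a b c (\<lambda>i. if i = j then p else 1)) - 1) / (real p)^2)"
      unfolding rS_def by simp
    finally show ?thesis .
  qed
  have "(\<Sum>S\<in>T. G S) = (\<Sum>S\<in>T. (-1::real)^(card S + 1)) / (real p)^2 +
      (\<Sum>S\<in>T. (if card S = 1 then (rS S - 1) / (real p)^2 else 0))"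
    unfolding G_def by (simp only: sum.distrib sum_divide_distrib)
  also have "\<dots> = 1 / (real p)^2 +
      ((\<Sum>j<g. real (rho g a b c (\<lambda>i. if i = j then p else 1))) - real g) / (real p)^2"
    unfolding s1 s2 by (simp add: sum_divide_distrib[symmetric] sum_subtractf)
  finally have "(\<Sum>S\<in>T. G S) = ((\<Sum>j<g. real (rho g a b c (\<lambda>i. if i = j then p else 1))) + 1 - real g) / (real p)^2"
    by (simp add: add_divide_distrib[symmetric] algebra_simps)
  thus ?thesis unfolding omega_eq reidx using p1 aux_final by simp
qed

end
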